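(* Let $U$ be a Hilbert space, $T: U\rightrightarrows U$, $(\hat u,\hat w)\in\operatorname{graph}T$, $N,M\in\mathcal{L}(U;U)$ with $M\ge0$, and $\gamma\in[0,1]$. Then $(N,\gamma M)$-subregularity of $T$ at $(\hat u,\hat w)$ implies $(\gamma M,N,M)$-partial subregularity at the same point. If $T^{-1}(\hat w)=\{\hat u\}$ is a singleton, these two properties are equivalent.
   Context: For $T\in\mathcal{L}(U;U)$: $\|x\|^2_T:=\langle Tx,x\rangle$, $\operatorname{dist}^2_T(z,A):=\inf_{u\in A}\|z-u\|^2_T$ ($\inf\emptyset=+\infty$). For $M,P,N\in\mathcal{L}(U;U)$ with $N\ge0$, $M\ge0$, $M\ge P$, $T$ is $(P,N,M)$-partially subregular at $(\hat u,\hat w)$ if there is a neighbourhood $\mathcal{U}\ni\hat u$ with $\operatorname{dist}^2_N(\hat w,T(u)) + \operatorname{dist}^2_{M-P}(u,T^{-1}(\hat w))\ge\operatorname{dist}^2_M(u,T^{-1}(\hat w))$ for all $u\in\mathcal{U}$. $T$ is $(N,M)$-subregular if it is $(M,N,M)$-partially subregular. *)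

theory Defs
  imports "HOL-Analysis.Analysis"
begin

definition normsq_op :: "('a::real_inner \<Rightarrow>\<^sub>L 'a) \<Rightarrow> 'a \<Rightarrow> real" where
  "normsq_op T x = inner (blinfun_apply T x) x"

(* dist^2_T(z,A) := inf_{u in A} \<parallel>z-u\<parallel>^2_T, with inf of the empty set = +\<infinity> (ereal) *)
definition distsq_op :: "('a::real_inner \<Rightarrow>\<^sub>L 'a) \<Rightarrow> 'a \<Rightarrow> 'a set \<Rightarrow> ereal" where
  "distsq_op T z A = (INF u\<in>A. ereal (normsq_op T (z - u)))"

definition op_nonneg :: "('a::real_inner \<Rightarrow>\<^sub>L 'a) \<Rightarrow> bool" where
  "op_nonneg T \<longleftrightarrow> (\<forall>x. 0 \<le> inner (blinfun_apply T x) x)"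

definition op_ge :: "('a::real_inner \<Rightarrow>\<^sub>L 'a) \<Rightarrow> ('a \<Rightarrow>\<^sub>L 'a) \<Rightarrow> bool" where
  "op_ge M P \<longleftrightarrow> op_nonneg (M - P)"

definition setinv :: "('a \<Rightarrow> 'b set) \<Rightarrow> 'b \<Rightarrow> 'a set" where
  "setinv T w = {u. w \<in> T u}"

(* (P,N,M)-partial subregularity at (uh,wh); standing assumptions N \<ge> 0, M \<ge> 0, M \<ge> P
   are part of the definition *)
definition partially_subregular ::
  "('a::real_inner \<Rightarrow>\<^sub>L 'a) \<Rightarrow> ('a \<Rightarrow>\<^sub>L 'a) \<Rightarrow> ('a \<Rightarrow>\<^sub>L 'a) \<Rightarrow> ('a \<Rightarrow> 'a set) \<Rightarrow> 'a \<Rightarrow> 'a \<Rightarrow> bool"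
  where
  "partially_subregular P N M T uh wh \<longleftrightarrow>
     op_nonneg N \<and> op_nonneg M \<and> op_ge M P \<and>
     (\<exists>V. open V \<and> uh \<in> V \<and>
        (\<forall>u\<in>V. distsq_op N wh (T u) + distsq_op (M - P) u (setinv T wh)
                  \<ge> distsq_op M u (setinv T wh)))"

definition subregular ::
  "('a::real_inner \<Rightarrow>\<^sub>L 'a) \<Rightarrow> ('a \<Rightarrow>\<^sub>L 'a) \<Rightarrow> ('a \<Rightarrow> 'a set) \<Rightarrow> 'a \<Rightarrow> 'a \<Rightarrow> bool"
  where
  "subregular N M T uh wh \<longleftrightarrow> partially_subregular M N M T uh wh"

end

theory Submission
  imports Defs
begin

lemma normsq_scale: "normsq_op (c *\<^sub>R M) x = c * normsq_op M x"
  by (simp add: normsq_op_def scaleR_blinfun.rep_eq)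

lemma dist_scale:
  assumes "0 \<le> c" "S \<noteq> {}"
  shows "distsq_op (c *\<^sub>R M) u S = ereal c * distsq_op M u S"
proof (cases "c = 0")
  case True
  then show ?thesis using assms(2) by (simp add: distsq_op_def normsq_scale normsq_op_def scaleR_blinfun.rep_eq zero_ereal_def[symmetric])
next
  case False
  then have cp: "c > 0" using assms by simp
  have "bij ((*) (ereal c))"
    apply (rule bij_betw_byWitness[of _ "\<lambda>x. (x::ereal) / c"], auto simp: cp ereal_mult_divide)
    using cp ereal_divide_eq by auto
  then have "ereal c * Inf ((\<lambda>s. ereal (normsq_op M (u - s))) ` S)
      = Inf ((*) (ereal c) ` ((\<lambda>s. ereal (normsq_op M (u - s))) ` S))"
    by (simp add: cp ereal_mult_left_mono less_imp_le mono_def mono_bij_Inf)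
  then show ?thesis
    by (simp add: distsq_op_def normsq_scale image_comp o_def)
qed

lemma dist_fin:
  assumes "op_nonneg M" "s \<in> S"
  shows "\<exists>r. distsq_op M u S = ereal r \<and> 0 \<le> r"
proof -
  have lo: "0 \<le> distsq_op M u S"
    unfolding distsq_op_def using assms(1)
    by (auto intro!: INF_greatest simp: normsq_op_def op_nonneg_def)
  have hi: "distsq_op M u S \<le> ereal (normsq_op M (u - s))"
    unfolding distsq_op_def using assms(2) by (rule INF_lower)
  show ?thesis using lo hi by (cases "distsq_op M u S") auto
qed

lemma dist_zero:
  assumes "S \<noteq> {}"
  shows "distsq_op 0 u S = 0"
  using assms by (simp add: distsq_op_def normsq_op_def zero_ereal_def[symmetric])

theorem corollary4p6:
  fixes T :: "'a::{real_inner,complete_space} \<Rightarrow> 'a set"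
    and N M :: "'a \<Rightarrow>\<^sub>L 'a"
    and uh wh :: 'a
    and \<gamma> :: real
  assumes "wh \<in> T uh"
    and "op_nonneg M"
    and "0 \<le> \<gamma>" and "\<gamma> \<le> 1"
  shows "(subregular N (\<gamma> *\<^sub>R M) T uh wh \<longrightarrow> partially_subregular (\<gamma> *\<^sub>R M) N M T uh wh)
    \<and> (setinv T wh = {uh} \<longrightarrow>
         (subregular N (\<gamma> *\<^sub>R M) T uh wh \<longleftrightarrow> partially_subregular (\<gamma> *\<^sub>R M) N M T uh wh))"
proof -
  define S where "S = setinv T wh"
  have S0: "uh \<in> S" using assms(1) by (simp add: S_def setinv_def)
  have MgM: "M - \<gamma> *\<^sub>R M = (1 - \<gamma>) *\<^sub>R M" by (simp add: algebra_simps)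
  have nnM: "op_nonneg (\<gamma> *\<^sub>R M)" using assms(2,3)
    by (simp add: op_nonneg_def scaleR_blinfun.rep_eq)
  have geM: "op_ge M (\<gamma> *\<^sub>R M)" using assms(2,4)
    by (simp add: op_ge_def MgM op_nonneg_def scaleR_blinfun.rep_eq)
  have geg: "op_ge (\<gamma> *\<^sub>R M) (\<gamma> *\<^sub>R M)" by (simp add: op_ge_def op_nonneg_def)
  have dg: "\<And>u. distsq_op (\<gamma> *\<^sub>R M) u S = ereal \<gamma> * distsq_op M u S"
    using dist_scale assms(3) S0 by blast
  have dg1: "\<And>u. distsq_op (M - \<gamma> *\<^sub>R M) u S = ereal (1 - \<gamma>) * distsq_op M u S"
    unfolding MgM using dist_scale assms(4) S0 by (metis diff_ge_0_iff_ge empty_iff)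
  have key: "distsq_op N wh (T u) \<ge> distsq_op (\<gamma> *\<^sub>R M) u S
     \<longleftrightarrow> distsq_op N wh (T u) + distsq_op (M - \<gamma> *\<^sub>R M) u S \<ge> distsq_op M u S" for u
  proof -
    obtain r where r: "distsq_op M u S = ereal r" "0 \<le> r" using dist_fin[OF assms(2) S0] by blast
    show ?thesis unfolding dg dg1 r
      by (cases "distsq_op N wh (T u)") (auto simp: algebra_simps)
  qed
  have d0: "\<And>u. distsq_op (\<gamma> *\<^sub>R M - \<gamma> *\<^sub>R M) u S = 0" using dist_zero S0 by auto
  have eq: "subregular N (\<gamma> *\<^sub>R M) T uh wh \<longleftrightarrow> partially_subregular (\<gamma> *\<^sub>R M) N M T uh wh"
    unfolding subregular_def partially_subregular_def S_def[symmetric]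
    using d0 key nnM geM geg assms(2) by simp
  show ?thesis using eq by simp
qed

end
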